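(* Let $n\ge2$, $1\le k\le n-1$, $N=\binom n2$, and let $(s_t)_{t\in\mathbb Z}$ be the periodic extension of a uniformly random sorting network in $\Omega_n$. Let $\mathrm{Sp}_{k,n}=Y-X$ with $X=\max\{t\le0:s_t=k\}$, $Y=\min\{t>0:s_t=k\}$; let $\widehat{\mathrm{Sp}}_{k,n}$ have the conditional law of $\min\{t>0:s_t=k\}$ given $\{s_0=k\}$; let $\mathbf T_{FS,n}(k)=\min\{t\ge1:s_t=k\}$. Put $f'_1(L)=\mathbb P(\mathrm{Sp}_{k,n}=L)$, $f'_2(L)=\mathbb P(\widehat{\mathrm{Sp}}_{k,n}=L)$, $g'(L)=\mathbb P(\mathbf T_{FS,n}(k)=L)$, $\Delta g'(L)=g'(L+1)-g'(L)$, and $M=\mathbb P(s_1=k)=|\{\omega\in\Omega_n:s_1=k\}|/|\Omega_n|$. Then for all $L\ge1$, $$-\Delta g'(L)\cdot L=f'_1(L),\qquad -\Delta g'(L)=M\cdot f'_2(L).$$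
   Context: $\tau_k=(k,k+1)\in\mathfrak S_n$. A sorting network of size $n$ is $(s_1,\dots,s_N)$, $s_i\in\{1,\dots,n-1\}$, with $\tau_{s_1}\cdots\tau_{s_N}=(n\ n-1\ \dots\ 2\ 1)$; $\Omega_n$ is the set of them, with the uniform measure. Its periodic extension is $(s_t)_{t\in\mathbb Z}$ with $s_{t+N}=n-s_t$ for all $t$ (a $2N$-periodic sequence). *)

theory Defs
  imports Complex_Main "HOL-Combinatorics.Transposition"
begin

definition adj_tau :: "nat \<Rightarrow> nat \<Rightarrow> nat" where
  "adj_tau k = Transposition.transpose k (Suc k)"

definition word_prod :: "nat list \<Rightarrow> nat \<Rightarrow> nat" where
  "word_prod s = foldr (\<lambda>k f. adj_tau k \<circ> f) s id"

definition rev_perm :: "nat \<Rightarrow> nat \<Rightarrow> nat" where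
  "rev_perm n = (\<lambda>i. if 1 \<le> i \<and> i \<le> n then n + 1 - i else i)"

definition sorting_networks :: "nat \<Rightarrow> nat list set" where
  "sorting_networks n = {s. length s = n choose 2 \<and> set s \<subseteq> {1..n-1}
                          \<and> word_prod s = rev_perm n}"

text \<open>Periodic extension: s_t for t in Z, with s_{t+N} = n - s_t, where s_t = s!(t-1) for 1 <= t <= N.\<close>
definition per_ext :: "nat \<Rightarrow> nat list \<Rightarrow> int \<Rightarrow> nat" where
  "per_ext n s t = (let N = int (length s); q = (t - 1) div N; r = nat ((t - 1) mod N)
                    in if even q then s ! r else n - s ! r)"

definition unif_prob :: "nat \<Rightarrow> (nat list \<Rightarrow> bool) \<Rightarrow> real" where
  "unif_prob n P = real (card {s \<in> sorting_networks n. P s}) / real (card (sorting_networks n))"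

definition spacing :: "nat \<Rightarrow> nat \<Rightarrow> nat list \<Rightarrow> int" where
  "spacing n k s = (LEAST t. t > 0 \<and> per_ext n s t = k) - (GREATEST t. t \<le> 0 \<and> per_ext n s t = k)"

definition first_after :: "nat \<Rightarrow> nat \<Rightarrow> nat list \<Rightarrow> int" where
  "first_after n k s = (LEAST t. t > 0 \<and> per_ext n s t = k)"

definition T_FS :: "nat \<Rightarrow> nat \<Rightarrow> nat list \<Rightarrow> int" where
  "T_FS n k s = (LEAST t. t \<ge> 1 \<and> per_ext n s t = k)"

definition f1' :: "nat \<Rightarrow> nat \<Rightarrow> int \<Rightarrow> real" where
  "f1' n k L = unif_prob n (\<lambda>s. spacing n k s = L)"

definition f2' :: "nat \<Rightarrow> nat \<Rightarrow> int \<Rightarrow> real" where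
  "f2' n k L = unif_prob n (\<lambda>s. first_after n k s = L \<and> per_ext n s 0 = k)
               / unif_prob n (\<lambda>s. per_ext n s 0 = k)"

definition g' :: "nat \<Rightarrow> nat \<Rightarrow> int \<Rightarrow> real" where
  "g' n k L = unif_prob n (\<lambda>s. T_FS n k s = L)"

end

theory Submission
  imports Defs
begin

definition rot :: "nat \<Rightarrow> nat list \<Rightarrow> nat list" where
  "rot n s = tl s @ [n - hd s]"

lemma word_prod_Cons: "word_prod (a # r) = adj_tau a \<circ> word_prod r"
  by (simp add: word_prod_def)

lemma word_prod_snoc: "word_prod (r @ [b]) = word_prod r \<circ> adj_tau b"
  by (induction r) (auto simp: word_prod_def)

lemma adj_tau_invol: "adj_tau a (adj_tau a x) = x"
  by (simp add: adj_tau_def transpose_def)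

lemma rev_adj: assumes "1 \<le> a" "a \<le> n - 1"
  shows "rev_perm n (adj_tau (n - a) x) = adj_tau a (rev_perm n x)"
  using assms by (auto simp: rev_perm_def adj_tau_def transpose_def)

lemma sn_len: "s \<in> sorting_networks n \<Longrightarrow> length s = n choose 2"
  by (simp add: sorting_networks_def)

lemma sn_nonempty: "2 \<le> n \<Longrightarrow> s \<in> sorting_networks n \<Longrightarrow> s \<noteq> []"
  using sn_len[of s n] zero_less_binomial_iff[of 2 n] by auto

lemma sn_finite: "finite (sorting_networks n)"
proof -
  have "sorting_networks n \<subseteq> {xs. set xs \<subseteq> {1..n-1} \<and> length xs = n choose 2}"
    by (auto simp: sorting_networks_def)
  thus ?thesis using finite_lists_length_eq[of "{1..n-1}"] finite_subset by blast
qed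

lemma rot_in: assumes "2 \<le> n" "s \<in> sorting_networks n" shows "rot n s \<in> sorting_networks n"
proof -
  obtain a r where s: "s = a # r" using sn_nonempty[OF assms] by (cases s) auto
  have a: "1 \<le> a" "a \<le> n - 1" and rs: "set r \<subseteq> {1..n-1}"
    using assms(2) s by (auto simp: sorting_networks_def)
  have wp: "adj_tau a \<circ> word_prod r = rev_perm n"
    using assms(2) s by (simp add: sorting_networks_def word_prod_Cons)
  have "word_prod (r @ [n - a]) = rev_perm n"
  proof
    fix x
    have "word_prod (r @ [n - a]) x = word_prod r (adj_tau (n - a) x)"
      by (simp add: word_prod_snoc)
    also have "\<dots> = adj_tau a (adj_tau a (word_prod r (adj_tau (n - a) x)))"
      by (simp add: adj_tau_invol)
    also have "\<dots> = adj_tau a (rev_perm n (adj_tau (n - a) x))"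
      using wp by (metis comp_apply)
    also have "\<dots> = rev_perm n x" using rev_adj[OF a] adj_tau_invol by simp
    finally show "word_prod (r @ [n - a]) x = rev_perm n x" .
  qed
  thus ?thesis using assms(2) s a rs by (auto simp: sorting_networks_def rot_def)
qed

lemma rot_inj: assumes "2 \<le> n" shows "inj_on (rot n) (sorting_networks n)"
proof
  fix s s' assume s: "s \<in> sorting_networks n" and s': "s' \<in> sorting_networks n"
    and eq: "rot n s = rot n s'"
  obtain a r where sa: "s = a # r" using sn_nonempty[OF assms s] by (cases s) auto
  obtain a' r' where sa': "s' = a' # r'" using sn_nonempty[OF assms s'] by (cases s') auto
  have "a \<le> n - 1" "a' \<le> n - 1" using s s' sa sa' by (auto simp: sorting_networks_def)
  moreover have "r = r'" "n - a = n - a'" using eq sa sa' by (auto simp: rot_def)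
  ultimately show "s = s'" using sa sa' assms by auto
qed

lemma rot_image: assumes "2 \<le> n" shows "rot n ` sorting_networks n = sorting_networks n"
  using endo_inj_surj[OF sn_finite _ rot_inj[OF assms]] rot_in[OF assms] by blast

lemma per_rot: assumes "2 \<le> n" "s \<in> sorting_networks n"
  shows "per_ext n (rot n s) t = per_ext n s (t + 1)"
proof -
  obtain a r where s: "s = a # r" using sn_nonempty[OF assms] by (cases s) auto
  have a: "a \<le> n" using assms(2) s by (auto simp: sorting_networks_def)
  define N where "N = int (length s)"
  have N: "N > 0" "int (length (rot n s)) = N" using s by (auto simp: N_def rot_def)
  define q where "q = (t - 1) div N"
  define m where "m = (t - 1) mod N"
  have m: "0 \<le> m" "m < N" "t - 1 = N * q + m" using N by (auto simp: m_def q_def)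
  show ?thesis
  proof (cases "m + 1 < N")
    case True
    have t: "t = (m + 1) + q * N" using m by (simp add: algebra_simps)
    have d: "t div N = q" "t mod N = m + 1"
      using m True N unfolding t by simp_all
    have idx: "rot n s ! nat m = s ! nat (m + 1)"
      using True m s N by (auto simp: rot_def N_def nth_append nat_add_distrib)
    show ?thesis using d idx N unfolding per_ext_def
      by (simp add: Let_def N_def[symmetric] q_def[symmetric] m_def[symmetric])
  next
    case False
    hence mN: "m = N - 1" using m by auto
    have t: "t = (q + 1) * N" using m mN by (simp add: algebra_simps)
    have d: "t div N = q + 1" "t mod N = 0"
      using N unfolding t by simp_all
    have idx: "rot n s ! nat m = n - a"
      using mN s by (auto simp: rot_def N_def nth_append)
    have s0: "s ! 0 = a" using s by simp
    show ?thesis using d idx N a s0 unfolding per_ext_def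
      by (simp add: Let_def N_def[symmetric] q_def[symmetric] m_def[symmetric])
  qed
qed


lemma up_cong: "(\<And>s. s \<in> sorting_networks n \<Longrightarrow> P s = Q s) \<Longrightarrow> unif_prob n P = unif_prob n Q"
  unfolding unif_prob_def by (metis (mono_tags, lifting) mem_Collect_eq Collect_cong)

lemma stat1: assumes "2 \<le> n"
  shows "unif_prob n (\<lambda>s. Q (\<lambda>t. per_ext n s (t + 1))) = unif_prob n (\<lambda>s. Q (per_ext n s))"
proof -
  let ?S = "sorting_networks n"
  let ?A = "{s \<in> ?S. Q (per_ext n (rot n s))}"
  have pr: "\<And>s. s \<in> ?S \<Longrightarrow> per_ext n (rot n s) = (\<lambda>t. per_ext n s (t + 1))"
    using per_rot[OF assms] by blast
  have e1: "{s \<in> ?S. Q (\<lambda>t. per_ext n s (t + 1))} = ?A"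
    using pr by (metis (no_types, lifting))
  have e2: "rot n ` ?A = {s \<in> ?S. Q (per_ext n s)}"
  proof
    show "rot n ` ?A \<subseteq> {s \<in> ?S. Q (per_ext n s)}"
      using rot_in[OF assms] by blast
  next
    show "{s \<in> ?S. Q (per_ext n s)} \<subseteq> rot n ` ?A"
    proof
      fix x assume x: "x \<in> {s \<in> ?S. Q (per_ext n s)}"
      then obtain y where y: "y \<in> ?S" "x = rot n y" using rot_image[OF assms] by blast
      thus "x \<in> rot n ` ?A" using x by blast
    qed
  qed
  have inj: "inj_on (rot n) ?A"
    using rot_inj[OF assms] by (rule inj_on_subset) blast
  have "card {s \<in> ?S. Q (\<lambda>t. per_ext n s (t + 1))} = card {s \<in> ?S. Q (per_ext n s)}"
    unfolding e1 e2[symmetric] using card_image[OF inj] by simp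
  thus ?thesis by (simp add: unif_prob_def)
qed

lemma stat_nat: assumes "2 \<le> n"
  shows "unif_prob n (\<lambda>s. Q (\<lambda>t. per_ext n s (t + int m))) = unif_prob n (\<lambda>s. Q (per_ext n s))"
proof (induction m arbitrary: Q)
  case 0
  then show ?case by simp
next
  case (Suc m)
  have "unif_prob n (\<lambda>s. Q (\<lambda>t. per_ext n s (t + int (Suc m))))
      = unif_prob n (\<lambda>s. (\<lambda>g. Q (\<lambda>t. g (t + int m))) (\<lambda>t. per_ext n s (t + 1)))"
    by (simp add: algebra_simps)
  also have "\<dots> = unif_prob n (\<lambda>s. Q (\<lambda>t. per_ext n s (t + int m)))"
    by (rule stat1[OF assms])
  finally show ?case using Suc by simp
qed

lemma stat_int: assumes "2 \<le> n"
  shows "unif_prob n (\<lambda>s. Q (\<lambda>t. per_ext n s (t + d))) = unif_prob n (\<lambda>s. Q (per_ext n s))"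
proof (cases "d \<ge> 0")
  case True
  then show ?thesis using stat_nat[OF assms, of Q "nat d"] by simp
next
  case False
  define m where "m = nat (- d)"
  have d: "d = - int m" using False by (simp add: m_def)
  have "unif_prob n (\<lambda>s. (\<lambda>g. Q (\<lambda>t. g (t - int m))) (\<lambda>t. per_ext n s (t + int m)))
     = unif_prob n (\<lambda>s. (\<lambda>g. Q (\<lambda>t. g (t - int m))) (per_ext n s))"
    by (rule stat_nat[OF assms])
  thus ?thesis by (simp add: d)
qed

lemma up_disj: assumes "\<And>s. \<not> (P s \<and> Q s)"
  shows "unif_prob n (\<lambda>s. P s \<or> Q s) = unif_prob n P + unif_prob n Q"
proof -
  let ?S = "sorting_networks n"
  have "{s \<in> ?S. P s \<or> Q s} = {s \<in> ?S. P s} \<union> {s \<in> ?S. Q s}" by auto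
  moreover have "card ({s \<in> ?S. P s} \<union> {s \<in> ?S. Q s}) = card {s \<in> ?S. P s} + card {s \<in> ?S. Q s}"
    by (rule card_Un_disjoint) (use sn_finite assms in auto)
  ultimately show ?thesis by (simp add: unif_prob_def add_divide_distrib)
qed

lemma up_sum: assumes "finite J" "\<And>i j s. i \<in> J \<Longrightarrow> j \<in> J \<Longrightarrow> i \<noteq> j \<Longrightarrow> \<not> (P i s \<and> P j s)"
  shows "unif_prob n (\<lambda>s. \<exists>j\<in>J. P j s) = (\<Sum>j\<in>J. unif_prob n (P j))"
proof -
  let ?S = "sorting_networks n"
  have "{s \<in> ?S. \<exists>j\<in>J. P j s} = (\<Union>j\<in>J. {s \<in> ?S. P j s})" by auto
  moreover have "card (\<Union>j\<in>J. {s \<in> ?S. P j s}) = (\<Sum>j\<in>J. card {s \<in> ?S. P j s})"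
    by (rule card_UN_disjoint) (use sn_finite assms in auto)
  ultimately show ?thesis by (simp add: unif_prob_def sum_divide_distrib)
qed

lemma up_mono: assumes "\<And>s. P s \<Longrightarrow> Q s" shows "unif_prob n P \<le> unif_prob n Q"
proof -
  have "card {s \<in> sorting_networks n. P s} \<le> card {s \<in> sorting_networks n. Q s}"
    by (rule card_mono) (use sn_finite assms in auto)
  thus ?thesis by (simp add: unif_prob_def divide_right_mono)
qed

lemma up_nonneg: "unif_prob n P \<ge> 0" by (simp add: unif_prob_def)


lemma notin_bound: "k \<notin> set s \<Longrightarrow> i \<le> k \<Longrightarrow> word_prod s i \<le> k"
proof (induction s)
  case Nil
  then show ?case by (simp add: word_prod_def)
next
  case (Cons a r)
  hence x: "word_prod r i \<le> k" "a \<noteq> k" by auto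
  thus ?case by (auto simp: word_prod_Cons adj_tau_def transpose_def)
qed

lemma k_in: assumes "s \<in> sorting_networks n" "1 \<le> k" "k \<le> n - 1" shows "k \<in> set s"
proof (rule ccontr)
  assume "k \<notin> set s"
  hence "word_prod s 1 \<le> k" using notin_bound assms by auto
  moreover have "word_prod s 1 = n" using assms by (simp add: sorting_networks_def rev_perm_def)
  ultimately show False using assms by auto
qed

lemma per_first: "i < length s \<Longrightarrow> per_ext n s (int i + 1) = s ! i"
  by (simp add: per_ext_def Let_def)

lemma per_period: assumes "s \<noteq> []" shows "per_ext n s (t - 2 * int (length s)) = per_ext n s t"
proof -
  define N where "N = int (length s)"
  have N: "N > 0" using assms by (simp add: N_def)
  have e: "t - 2 * N - 1 = (t - 1) + (-2) * N" by simp
  have "(t - 2 * N - 1) div N = (t - 1) div N + (-2)" "(t - 2 * N - 1) mod N = (t - 1) mod N"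
    using N unfolding e by (simp_all only: div_mult_self1 mod_mult_self1 order.strict_implies_not_eq not_sym)
  thus ?thesis unfolding per_ext_def by (simp add: Let_def N_def[symmetric])
qed

lemma exists_k: assumes "s \<in> sorting_networks n" "1 \<le> k" "k \<le> n - 1"
  shows "\<exists>t>0. per_ext n s t = k" "\<exists>t\<le>0. per_ext n s t = k"
proof -
  obtain i where i: "i < length s" "s ! i = k" using k_in[OF assms] by (auto simp: in_set_conv_nth)
  show "\<exists>t>0. per_ext n s t = k" using per_first[OF i(1)] i by (intro exI[of _ "int i + 1"]) auto
  have "s \<noteq> []" using i by auto
  then show "\<exists>t\<le>0. per_ext n s t = k" using per_first[OF i(1)] i per_period[of s n "int i + 1"]
    by (intro exI[of _ "int i + 1 - 2 * int (length s)"]) auto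
qed

lemma least_char: fixes f :: "int \<Rightarrow> nat" assumes ex: "\<exists>t>0. f t = k"
  shows "(LEAST t. t > 0 \<and> f t = k) = L \<longleftrightarrow> (L > 0 \<and> f L = k \<and> (\<forall>t. 0 < t \<and> t < L \<longrightarrow> f t \<noteq> k))"
proof -
  let ?R = "\<lambda>L. L > 0 \<and> f L = k \<and> (\<forall>t. 0 < t \<and> t < L \<longrightarrow> f t \<noteq> k)"
  have eq: "(LEAST t. t > 0 \<and> f t = k) = L" if "?R L" for L
    by (rule Least_equality) (use that in force)+
  obtain t0 where t0: "t0 > 0" "f t0 = k" using ex by auto
  define m where "m = (LEAST m::nat. m > 0 \<and> f (int m) = k)"
  have P0: "nat t0 > 0 \<and> f (int (nat t0)) = k" using t0 by auto
  have m1: "m > 0 \<and> f (int m) = k" unfolding m_def using LeastI[of "\<lambda>m. m > 0 \<and> f (int m) = k", OF P0] .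
  have m2: "\<not> (u > 0 \<and> f (int u) = k)" if "u < m" for u
    using not_less_Least[of u "\<lambda>m. m > 0 \<and> f (int m) = k"] that m_def by blast
  have "?R (int m)"
  proof (intro conjI allI impI)
    fix t assume "0 < t \<and> t < int m"
    thus "f t \<noteq> k" using m2[of "nat t"] by (auto simp: nat_less_iff)
  qed (use m1 in auto)
  hence L: "(LEAST t. t > 0 \<and> f t = k) = int m" by (rule eq)
  show ?thesis
  proof
    assume "(LEAST t. t > 0 \<and> f t = k) = L"
    hence "L = int m" using L by simp
    thus "?R L" using \<open>?R (int m)\<close> by simp
  qed (rule eq)
qed

lemma greatest_char: fixes f :: "int \<Rightarrow> nat" assumes ex: "\<exists>t\<le>0. f t = k"
  shows "(GREATEST t. t \<le> 0 \<and> f t = k) = X \<longleftrightarrow> (X \<le> 0 \<and> f X = k \<and> (\<forall>t. X < t \<and> t \<le> 0 \<longrightarrow> f t \<noteq> k))"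
proof -
  let ?R = "\<lambda>X. X \<le> 0 \<and> f X = k \<and> (\<forall>t. X < t \<and> t \<le> 0 \<longrightarrow> f t \<noteq> k)"
  have eq: "(GREATEST t. t \<le> 0 \<and> f t = k) = X" if "?R X" for X
    by (rule Greatest_equality) (use that in force)+
  obtain t0 where t0: "t0 \<le> 0" "f t0 = k" using ex by auto
  define m where "m = (LEAST m::nat. f (- int m) = k)"
  have P0: "f (- int (nat (- t0))) = k" using t0 by auto
  have m1: "f (- int m) = k" unfolding m_def using LeastI[of "\<lambda>m. f (- int m) = k", OF P0] .
  have m2: "f (- int u) \<noteq> k" if "u < m" for u
    using not_less_Least[of u "\<lambda>m. f (- int m) = k"] that m_def by blast
  have "?R (- int m)"
  proof (intro conjI allI impI)
    fix t assume "- int m < t \<and> t \<le> 0"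
    thus "f t \<noteq> k" using m2[of "nat (- t)"] by (auto simp: nat_less_iff)
  qed (use m1 in auto)
  hence L: "(GREATEST t. t \<le> 0 \<and> f t = k) = - int m" by (rule eq)
  show ?thesis
  proof
    assume "(GREATEST t. t \<le> 0 \<and> f t = k) = X"
    hence "X = - int m" using L by simp
    thus "?R X" using \<open>?R (- int m)\<close> by simp
  qed (rule eq)
qed


definition Bev :: "nat \<Rightarrow> int \<Rightarrow> int \<Rightarrow> (int \<Rightarrow> nat) \<Rightarrow> bool" where
  "Bev k a b f \<longleftrightarrow> f a = k \<and> f b = k \<and> (\<forall>t. a < t \<and> t < b \<longrightarrow> f t \<noteq> k)"

definition Aev :: "nat \<Rightarrow> int \<Rightarrow> (int \<Rightarrow> nat) \<Rightarrow> bool" where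
  "Aev k L f \<longleftrightarrow> f L = k \<and> (\<forall>t. 1 \<le> t \<and> t < L \<longrightarrow> f t \<noteq> k)"

lemma Bev_shift: "Bev k a b (\<lambda>t. f (t + d)) = Bev k (a + d) (b + d) f"
proof -
  have "(\<forall>t. a < t \<and> t < b \<longrightarrow> f (t + d) \<noteq> k) \<longleftrightarrow> (\<forall>u. a + d < u \<and> u < b + d \<longrightarrow> f u \<noteq> k)"
  proof
    assume H: "\<forall>t. a < t \<and> t < b \<longrightarrow> f (t + d) \<noteq> k"
    show "\<forall>u. a + d < u \<and> u < b + d \<longrightarrow> f u \<noteq> k"
    proof (intro allI impI)
      fix u assume "a + d < u \<and> u < b + d"
      thus "f u \<noteq> k" using H[rule_format, of "u - d"] by simp
    qed
  qed auto
  thus ?thesis by (simp add: Bev_def)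
qed

lemma Aev_shift: assumes "L \<ge> 1"
  shows "Aev k L (\<lambda>t. f (t + 1)) \<longleftrightarrow> Bev k 1 (L + 1) f \<or> Aev k (L + 1) f"
    "\<not> (Bev k 1 (L + 1) f \<and> Aev k (L + 1) f)"
proof -
  have e: "(\<forall>t. 1 \<le> t \<and> t < L \<longrightarrow> f (t + 1) \<noteq> k) \<longleftrightarrow> (\<forall>u. 1 < u \<and> u < L + 1 \<longrightarrow> f u \<noteq> k)"
  proof
    assume H: "\<forall>t. 1 \<le> t \<and> t < L \<longrightarrow> f (t + 1) \<noteq> k"
    show "\<forall>u. 1 < u \<and> u < L + 1 \<longrightarrow> f u \<noteq> k"
    proof (intro allI impI)
      fix u :: int assume "1 < u \<and> u < L + 1"
      thus "f u \<noteq> k" using H[rule_format, of "u - 1"] by simp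
    qed
  qed auto
  have e2: "(\<forall>u. 1 \<le> u \<and> u < L + 1 \<longrightarrow> f u \<noteq> k) \<longleftrightarrow> f 1 \<noteq> k \<and> (\<forall>u. 1 < u \<and> u < L + 1 \<longrightarrow> f u \<noteq> k)"
  proof
    assume H: "\<forall>u. 1 \<le> u \<and> u < L + 1 \<longrightarrow> f u \<noteq> k"
    show "f 1 \<noteq> k \<and> (\<forall>u. 1 < u \<and> u < L + 1 \<longrightarrow> f u \<noteq> k)"
      using H[rule_format, of 1] H assms by auto
  next
    assume H: "f 1 \<noteq> k \<and> (\<forall>u. 1 < u \<and> u < L + 1 \<longrightarrow> f u \<noteq> k)"
    show "\<forall>u. 1 \<le> u \<and> u < L + 1 \<longrightarrow> f u \<noteq> k"
    proof (intro allI impI)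
      fix u :: int assume "1 \<le> u \<and> u < L + 1"
      thus "f u \<noteq> k" using H by (cases "u = 1") auto
    qed
  qed
  show "Aev k L (\<lambda>t. f (t + 1)) \<longleftrightarrow> Bev k 1 (L + 1) f \<or> Aev k (L + 1) f"
    unfolding Aev_def Bev_def e e2 by auto
  show "\<not> (Bev k 1 (L + 1) f \<and> Aev k (L + 1) f)"
    unfolding Aev_def Bev_def e2 by auto
qed

lemma spacing_char: fixes f :: "int \<Rightarrow> nat"
  assumes ex1: "\<exists>t>0. f t = k" and ex2: "\<exists>t\<le>0. f t = k"
  shows "(LEAST t. t > 0 \<and> f t = k) - (GREATEST t. t \<le> 0 \<and> f t = k) = L
         \<longleftrightarrow> (\<exists>j\<in>{0..<L}. Bev k (- j) (L - j) f)"
proof -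
  define Y where "Y = (LEAST t. t > 0 \<and> f t = k)"
  define X where "X = (GREATEST t. t \<le> 0 \<and> f t = k)"
  have RY: "Y > 0 \<and> f Y = k \<and> (\<forall>t. 0 < t \<and> t < Y \<longrightarrow> f t \<noteq> k)"
    using least_char[OF ex1, of Y] Y_def by simp
  have RX: "X \<le> 0 \<and> f X = k \<and> (\<forall>t. X < t \<and> t \<le> 0 \<longrightarrow> f t \<noteq> k)"
    using greatest_char[OF ex2, of X] X_def by simp
  show ?thesis unfolding Y_def[symmetric] X_def[symmetric]
  proof
    assume L: "Y - X = L"
    have "Bev k X Y f" unfolding Bev_def
    proof (intro conjI allI impI)
      fix t assume "X < t \<and> t < Y"
      thus "f t \<noteq> k" using RX RY by (cases "t \<le> 0") auto
    qed (use RX RY in auto)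
    moreover have "- X \<in> {0..<L}" using RX RY L by auto
    ultimately show "\<exists>j\<in>{0..<L}. Bev k (- j) (L - j) f" using L
      by (intro bexI[of _ "- X"]) (auto simp: algebra_simps)
  next
    assume "\<exists>j\<in>{0..<L}. Bev k (- j) (L - j) f"
    then obtain j where j: "0 \<le> j" "j < L" "Bev k (- j) (L - j) f" by auto
    have "Y = L - j" using least_char[OF ex1, of "L - j"] j unfolding Y_def Bev_def by auto
    moreover have "X = - j" using greatest_char[OF ex2, of "- j"] j unfolding X_def Bev_def by auto
    ultimately show "Y - X = L" by simp
  qed
qed

lemma Bev_disj_aux: assumes "0 \<le> i" "i < j" "j < L" "Bev k (- i) (L - i) f"
  shows "\<not> Bev k (- j) (L - j) f"
proof
  assume H: "Bev k (- j) (L - j) f"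
  have "- j < - i" "- i < L - j" using assms by auto
  hence "f (- i) \<noteq> k" using H unfolding Bev_def by blast
  thus False using assms(4) unfolding Bev_def by blast
qed

lemma Bev_disj: assumes "i \<in> {0..<L}" "j \<in> {0..<L}" "i \<noteq> j"
  shows "\<not> (Bev k (- i) (L - i) f \<and> Bev k (- j) (L - j) f)"
proof (cases "i < j")
  case True
  thus ?thesis using Bev_disj_aux[of i j L k f] assms by auto
next
  case False
  hence "j < i" using assms by auto
  thus ?thesis using Bev_disj_aux[of j i L k f] assms by auto
qed

theorem proposition4p6:
  fixes n k :: nat and L :: int
  assumes "n \<ge> 2" and "1 \<le> k" and "k \<le> n - 1" and "L \<ge> 1"
  shows "- (g' n k (L + 1) - g' n k L) * real_of_int L = f1' n k L
       \<and> - (g' n k (L + 1) - g' n k L) = unif_prob n (\<lambda>s. per_ext n s 1 = k) * f2' n k L"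
proof -
  note n = assms(1)
  have ex1: "\<exists>t>0. per_ext n s t = k" if "s \<in> sorting_networks n" for s
    using exists_k[OF that assms(2,3)] by blast
  have ex2: "\<exists>t\<le>0. per_ext n s t = k" if "s \<in> sorting_networks n" for s
    using exists_k[OF that assms(2,3)] by blast
  define \<beta> where "\<beta> = unif_prob n (\<lambda>s. Bev k 0 L (per_ext n s))"
  have Tc: "T_FS n k s = M \<longleftrightarrow> Aev k M (per_ext n s)" if "s \<in> sorting_networks n" "M \<ge> 1" for s M
  proof -
    have e: "(\<lambda>t. t \<ge> 1 \<and> per_ext n s t = k) = (\<lambda>t. t > 0 \<and> per_ext n s t = k)" by auto
    show ?thesis unfolding T_FS_def e least_char[OF ex1[OF that(1)]] Aev_def using that(2) by auto
  qed
  have gL: "g' n k M = unif_prob n (\<lambda>s. Aev k M (per_ext n s))" if "M \<ge> 1" for M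
    unfolding g'_def by (rule up_cong) (use Tc that in auto)
  have "g' n k L = unif_prob n (\<lambda>s. Aev k L (\<lambda>t. per_ext n s (t + 1)))"
    using gL[OF assms(4)] stat_int[OF n, of "Aev k L" 1] by simp
  also have "\<dots> = unif_prob n (\<lambda>s. Bev k 1 (L + 1) (per_ext n s) \<or> Aev k (L + 1) (per_ext n s))"
    using Aev_shift(1)[OF assms(4)] by simp
  also have "\<dots> = unif_prob n (\<lambda>s. Bev k 1 (L + 1) (per_ext n s)) + g' n k (L + 1)"
    using up_disj[of "\<lambda>s. Bev k 1 (L + 1) (per_ext n s)" "\<lambda>s. Aev k (L + 1) (per_ext n s)" n]
      Aev_shift(2)[OF assms(4)] gL[of "L + 1"] assms(4) by simp
  also have "unif_prob n (\<lambda>s. Bev k 1 (L + 1) (per_ext n s)) = \<beta>"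
    unfolding \<beta>_def using stat_int[OF n, of "Bev k 0 L" 1] Bev_shift[of k 0 L _ 1] by simp
  finally have D: "- (g' n k (L + 1) - g' n k L) = \<beta>" by simp
  have M: "unif_prob n (\<lambda>s. per_ext n s 1 = k) = unif_prob n (\<lambda>s. per_ext n s 0 = k)"
    using stat_int[OF n, of "\<lambda>g. g 0 = k" 1] by simp
  have num: "unif_prob n (\<lambda>s. first_after n k s = L \<and> per_ext n s 0 = k) = \<beta>"
    unfolding \<beta>_def
  proof (rule up_cong)
    fix s assume s: "s \<in> sorting_networks n"
    show "(first_after n k s = L \<and> per_ext n s 0 = k) = Bev k 0 L (per_ext n s)"
      unfolding first_after_def least_char[OF ex1[OF s]] Bev_def using assms(4) by auto
  qed
  have second: "- (g' n k (L + 1) - g' n k L) = unif_prob n (\<lambda>s. per_ext n s 1 = k) * f2' n k L"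
  proof (cases "unif_prob n (\<lambda>s. per_ext n s 0 = k) = 0")
    case True
    have "\<beta> \<le> unif_prob n (\<lambda>s. per_ext n s 0 = k)"
      unfolding \<beta>_def by (rule up_mono) (simp add: Bev_def)
    hence "\<beta> = 0" using True \<beta>_def up_nonneg[of n] by (metis order.antisym)
    thus ?thesis using D M True by simp
  next
    case False
    thus ?thesis using D M num by (simp add: f2'_def)
  qed
  have "f1' n k L = unif_prob n (\<lambda>s. \<exists>j\<in>{0..<L}. Bev k (- j) (L - j) (per_ext n s))"
    unfolding f1'_def
  proof (rule up_cong)
    fix s assume s: "s \<in> sorting_networks n"
    show "(spacing n k s = L) = (\<exists>j\<in>{0..<L}. Bev k (- j) (L - j) (per_ext n s))"
      unfolding spacing_def using spacing_char[OF ex1[OF s] ex2[OF s]] .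
  qed
  also have "\<dots> = (\<Sum>j\<in>{0..<L}. unif_prob n (\<lambda>s. Bev k (- j) (L - j) (per_ext n s)))"
    by (rule up_sum) (use Bev_disj in auto)
  also have "\<dots> = (\<Sum>j\<in>{0..<L}. \<beta>)"
  proof (rule sum.cong)
    fix j assume "j \<in> {0..<L}"
    show "unif_prob n (\<lambda>s. Bev k (- j) (L - j) (per_ext n s)) = \<beta>"
      unfolding \<beta>_def using stat_int[OF n, of "Bev k 0 L" "- j"] Bev_shift[of k 0 L _ "- j"] by simp
  qed simp
  also have "\<dots> = real_of_int L * \<beta>" using assms(4) by simp
  finally have first: "- (g' n k (L + 1) - g' n k L) * real_of_int L = f1' n k L" using D by simp
  show ?thesis using first second by blast
qed

end
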